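(* Consider the four-agent technology adoption game. There exists $\varepsilon_0>0$ such that for every $\varepsilon\in(0,\varepsilon_0)$ there is a nonempty open interval $J\subset(0,1)$ of costs such that for every $c\in J$: in the line network seeded via agent 1 there is an equilibrium in which the probability that all four agents adopt is strictly greater than the probability that all four adopt in every equilibrium of the cycle network seeded via agent 1.
   Context: Fix $\rho\in(0,1)$, $\varepsilon\in(0,1)$, agents $\{1,2,3,4\}$, state $\theta\in\{g,b\}$ with $\Pr(\theta=g)=\rho$. In state $b$ no messages are sent. In state $g$ messages travel along directed arcs, each transmission lost independently with probability $\varepsilon$, and an agent sends along her outgoing arcs only if she received at least one message. Line network seeded via 1: arcs $0\to1\to2\to3\to4$ (0 is the planner); each agent observes only whether she received a message. Cycle network (undirected cycle $1-2-3-4-1$) seeded via 1: arcs $0\to1$, $1\to2$, $1\to4$, $2\to3$, $4\to3$; agents $1,2,4$ observe whether they received a message; agent 3 observes which of the arcs $2\to3$, $4\to3$ delivered a message (types: only from 2, only from 4, from both, from neither). Technology adoption game with cost $c\in(0,1)$: each agent chooses $a_i\in\{0,1\}$ as a function of her information (possibly mixed); payoff $a_i(\mathbf 1[\theta=g\text{ and all four adopt}]-c)$; equilibria are Bayesian Nash equilibria. *)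

theory Defs
  imports Complex_Main
begin

text \<open>
A realization (world) is a pair (theta, xs): theta = True means state g, False means state b;
xs lists the independent success indicators of the transmissions along the arcs
(each arc succeeds with probability 1 - eps). In state b nothing is sent, so the arc
indicators are irrelevant there (summing over them is harmless).
\<close>

definition worlds :: "nat \<Rightarrow> (bool \<times> bool list) set" where
  "worlds k = UNIV \<times> {xs. length xs = k}"

definition wprob :: "real \<Rightarrow> real \<Rightarrow> bool \<times> bool list \<Rightarrow> real" where
  "wprob \<rho> \<epsilon> w = (if fst w then \<rho> else 1 - \<rho>) *
      prod_list (map (\<lambda>x. if x then 1 - \<epsilon> else \<epsilon>) (snd w))"

record network =
  narcs :: nat
  sig :: "nat \<Rightarrow> bool \<times> bool list \<Rightarrow> nat"
  sigset :: "nat \<Rightarrow> nat set"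

definition agents :: "nat set" where "agents = {1,2,3,4}"

text \<open>Line network: arcs xs!0 = 0->1, xs!1 = 1->2, xs!2 = 2->3, xs!3 = 3->4.
  Agent i receives a message iff state g and all arcs up to her succeed. Signal 1 = received.\<close>
definition line_sig :: "nat \<Rightarrow> bool \<times> bool list \<Rightarrow> nat" where
  "line_sig i w = (if fst w \<and> (\<forall>j<i. snd w ! j) then 1 else 0)"

definition line_net :: network where
  "line_net = \<lparr> narcs = 4, sig = line_sig, sigset = (\<lambda>i. {0,1}) \<rparr>"

text \<open>Cycle network: arcs xs!0 = 0->1, xs!1 = 1->2, xs!2 = 1->4, xs!3 = 2->3, xs!4 = 4->3.
  Agents 1,2,4: signal 1 iff received.\<close>
definition cycle_sig :: "nat \<Rightarrow> bool \<times> bool list \<Rightarrow> nat" where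
  "cycle_sig i w =
     (let xs = snd w;
          r1 = fst w \<and> xs ! 0;
          r2 = r1 \<and> xs ! 1;
          r4 = r1 \<and> xs ! 2;
          f2 = r2 \<and> xs ! 3;
          f4 = r4 \<and> xs ! 4
      in if i = 1 then (if r1 then 1 else 0)
         else if i = 2 then (if r2 then 1 else 0)
         else if i = 4 then (if r4 then 1 else 0)
         else (if f2 then 1 else 0) + (if f4 then 2 else 0))"

definition cycle_net :: network where
  "cycle_net = \<lparr> narcs = 5, sig = cycle_sig,
                 sigset = (\<lambda>i. if i = 3 then {0,1,2,3} else {0,1}) \<rparr>"

text \<open>A (behavioural, possibly mixed) strategy profile: sigma i s = probability that agent i
  adopts after signal s.\<close>
definition valid_strategy :: "network \<Rightarrow> nat \<Rightarrow> (nat \<Rightarrow> real) \<Rightarrow> bool" where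
  "valid_strategy N i f \<longleftrightarrow> (\<forall>s\<in>sigset N i. 0 \<le> f s \<and> f s \<le> 1)"

definition valid_profile :: "network \<Rightarrow> (nat \<Rightarrow> nat \<Rightarrow> real) \<Rightarrow> bool" where
  "valid_profile N \<sigma> \<longleftrightarrow> (\<forall>i\<in>agents. valid_strategy N i (\<sigma> i))"

definition payoff :: "network \<Rightarrow> real \<Rightarrow> real \<Rightarrow> real \<Rightarrow> (nat \<Rightarrow> nat \<Rightarrow> real) \<Rightarrow> nat \<Rightarrow> real" where
  "payoff N \<rho> \<epsilon> c \<sigma> i =
     (\<Sum>w\<in>worlds (narcs N). wprob \<rho> \<epsilon> w * \<sigma> i (sig N i w) *
        ((if fst w then (\<Prod>j\<in>agents - {i}. \<sigma> j (sig N j w)) else 0) - c))"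

definition is_BNE :: "network \<Rightarrow> real \<Rightarrow> real \<Rightarrow> real \<Rightarrow> (nat \<Rightarrow> nat \<Rightarrow> real) \<Rightarrow> bool" where
  "is_BNE N \<rho> \<epsilon> c \<sigma> \<longleftrightarrow> valid_profile N \<sigma> \<and>
     (\<forall>i\<in>agents. \<forall>f. valid_strategy N i f \<longrightarrow>
        payoff N \<rho> \<epsilon> c (\<sigma>(i := f)) i \<le> payoff N \<rho> \<epsilon> c \<sigma> i)"

definition all_adopt_prob :: "network \<Rightarrow> real \<Rightarrow> real \<Rightarrow> (nat \<Rightarrow> nat \<Rightarrow> real) \<Rightarrow> real" where
  "all_adopt_prob N \<rho> \<epsilon> \<sigma> =
     (\<Sum>w\<in>worlds (narcs N). wprob \<rho> \<epsilon> w * (\<Prod>j\<in>agents. \<sigma> j (sig N j w)))"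

end

theory Submission
  imports Defs
begin

lemma L_Suc_sum: "(\<Sum>xs\<in>{xs::bool list. length xs = Suc n}. g xs) = (\<Sum>xs\<in>{xs. length xs = n}. g (True#xs)) + (\<Sum>xs\<in>{xs. length xs = n}. g (False#xs))"
proof -
  have e: "{xs::bool list. length xs = Suc n} = (Cons True) ` {xs. length xs = n} \<union> (Cons False) ` {xs. length xs = n}"
    by (auto simp: length_Suc_conv)
  have f: "finite {xs::bool list. length xs = n}" using finite_lists_length_eq[of "UNIV::bool set" n] by simp
  show ?thesis unfolding e
    by (subst sum.union_disjoint) (auto simp: f sum.reindex)
qed

lemma worlds_sum: "(\<Sum>w\<in>worlds n. f w) = (\<Sum>xs\<in>{xs. length xs = n}. f (True, xs) + f (False, xs))"
proof -
  have "(\<Sum>w\<in>worlds n. f w) = (\<Sum>t\<in>UNIV. \<Sum>xs\<in>{xs. length xs = n}. f (t,xs))"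
    unfolding worlds_def by (simp add: sum.cartesian_product)
  also have "\<dots> = (\<Sum>xs\<in>{xs. length xs = n}. f (True, xs) + f (False, xs))"
    by (simp add: UNIV_bool sum.distrib add.commute)
  finally show ?thesis .
qed

lemmas expand = numeral_eq_Suc worlds_sum L_Suc_sum wprob_def

lemma wprob_nonneg: "0 \<le> \<rho> \<Longrightarrow> \<rho> \<le> 1 \<Longrightarrow> 0 \<le> \<epsilon> \<Longrightarrow> \<epsilon> \<le> 1 \<Longrightarrow> 0 \<le> wprob \<rho> \<epsilon> w"
proof -
  assume a: "0 \<le> \<rho>" "\<rho> \<le> 1" "0 \<le> \<epsilon>" "\<epsilon> \<le> 1"
  have "0 \<le> prod_list (map (\<lambda>x. if x then 1 - \<epsilon> else \<epsilon>) xs)" for xs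
    by (induction xs) (use a in auto)
  then show ?thesis using a unfolding wprob_def by auto
qed

lemma bne_zero:
  assumes bne: "is_BNE N \<rho> \<epsilon> c \<tau>" and i: "i \<in> agents" and s: "s \<in> sigset N i"
    and D: "(\<Sum>w\<in>worlds (narcs N). if sig N i w = s then wprob \<rho> \<epsilon> w *
        ((if fst w then \<Prod>j\<in>agents-{i}. \<tau> j (sig N j w) else 0) - c) else 0) < 0"
  shows "\<tau> i s = 0"
proof -
  define f where "f = (\<tau> i)(s := 0)"
  have vp: "valid_strategy N i (\<tau> i)" using bne i unfolding is_BNE_def valid_profile_def by auto
  then have vf: "valid_strategy N i f" unfolding valid_strategy_def f_def by auto
  have ts: "0 \<le> \<tau> i s" using vp s unfolding valid_strategy_def by auto
  have dev: "payoff N \<rho> \<epsilon> c (\<tau>(i:=f)) i \<le> payoff N \<rho> \<epsilon> c \<tau> i"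
    using bne i vf unfolding is_BNE_def by auto
  have pe: "(\<Prod>j\<in>agents-{i}. (\<tau>(i:=f)) j (sig N j w)) = (\<Prod>j\<in>agents-{i}. \<tau> j (sig N j w))" for w
    by (rule prod.cong) auto
  define D where "D = (\<Sum>w\<in>worlds (narcs N). if sig N i w = s then wprob \<rho> \<epsilon> w *
        ((if fst w then \<Prod>j\<in>agents-{i}. \<tau> j (sig N j w) else 0) - c) else 0)"
  have "payoff N \<rho> \<epsilon> c \<tau> i - payoff N \<rho> \<epsilon> c (\<tau>(i:=f)) i = \<tau> i s * D"
    unfolding payoff_def D_def sum_subtractf[symmetric] sum_distrib_left
    by (rule sum.cong) (auto simp: pe f_def algebra_simps)
  with dev have "0 \<le> \<tau> i s * D" by linarith
  moreover have "D < 0" using D unfolding D_def .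
  ultimately show ?thesis using ts
    by (metis antisym_conv mult_pos_neg not_less)
qed

lemma S20: "(\<Sum>w\<in>worlds 5. if cycle_sig 2 w = 0 then wprob \<rho> \<epsilon> w * ((if fst w then 1 else 0) - c) else 0) = \<rho>*(1-(1-\<epsilon>)^2) - c*(1-\<rho> + \<rho>*(1-(1-\<epsilon>)^2))"
  apply (simp add: expand cycle_sig_def)
  apply (simp add: algebra_simps power2_eq_square)
  done

lemma S40: "(\<Sum>w\<in>worlds 5. if cycle_sig 4 w = 0 then wprob \<rho> \<epsilon> w * ((if fst w then 1 else 0) - c) else 0) = \<rho>*(1-(1-\<epsilon>)^2) - c*(1-\<rho> + \<rho>*(1-(1-\<epsilon>)^2))"
  apply (simp add: expand cycle_sig_def)
  apply (simp add: algebra_simps power2_eq_square)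
  done

lemma S31: "(\<Sum>w\<in>worlds 5. if cycle_sig 3 w = 1 then wprob \<rho> \<epsilon> w * ((if fst w \<and> cycle_sig 4 w = 1 then 1 else 0) - c) else 0)
   = \<rho>*(1-\<epsilon>)^4*\<epsilon> - c*\<rho>*(1-\<epsilon>)^3*(1-(1-\<epsilon>)^2)"
  apply (simp add: expand cycle_sig_def del: One_nat_def)
  apply (simp add: algebra_simps eval_nat_numeral)
  done

lemma S32: "(\<Sum>w\<in>worlds 5. if cycle_sig 3 w = 2 then wprob \<rho> \<epsilon> w * ((if fst w \<and> cycle_sig 2 w = 1 then 1 else 0) - c) else 0)
   = \<rho>*(1-\<epsilon>)^4*\<epsilon> - c*\<rho>*(1-\<epsilon>)^3*(1-(1-\<epsilon>)^2)"
  apply (simp add: expand cycle_sig_def del: One_nat_def)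
  apply (simp add: algebra_simps eval_nat_numeral)
  done

lemma SP: "(\<Sum>w\<in>worlds 5. wprob \<rho> \<epsilon> w * (if cycle_sig 2 w = 1 \<and> cycle_sig 4 w = 1 \<and> (cycle_sig 3 w = 0 \<or> cycle_sig 3 w = 3) then 1 else 0))
   = \<rho>*(1-\<epsilon>)^3*((1-\<epsilon>)^2+\<epsilon>^2)"
  apply (simp add: expand cycle_sig_def del: One_nat_def)
  apply (simp add: algebra_simps eval_nat_numeral)
  done

definition lineprof :: "nat \<Rightarrow> nat \<Rightarrow> real" where
  "lineprof = (\<lambda>i s. if s = 1 then 1 else 0)"

lemma ls: "line_sig 1 w = (if fst w \<and> snd w!0 then 1 else 0)"
  "line_sig 2 w = (if fst w \<and> snd w!0 \<and> snd w!1 then 1 else 0)"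
  "line_sig 3 w = (if fst w \<and> snd w!0 \<and> snd w!1 \<and> snd w!2 then 1 else 0)"
  "line_sig 4 w = (if fst w \<and> snd w!0 \<and> snd w!1 \<and> snd w!2 \<and> snd w!3 then 1 else 0)"
  unfolding line_sig_def by (auto simp: numeral_eq_Suc less_Suc_eq)
lemma ad: "agents-{1} = {2,3,4}" "agents-{2} = {1,3,4}" "agents-{3} = {1,2,4}" "agents-{4} = {1,2,3}"
  by (auto simp: agents_def)
lemma ap: "(\<Prod>j\<in>agents-{1}. g j) = (g 2 * (g 3 * g 4) :: real)"
  "(\<Prod>j\<in>agents-{2}. g j) = (g 1 * (g 3 * g 4) :: real)"
  "(\<Prod>j\<in>agents-{3}. g j) = (g 1 * (g 2 * g 4) :: real)"
  "(\<Prod>j\<in>agents-{4}. g j) = (g 1 * (g 2 * g 3) :: real)"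
  "(\<Prod>j\<in>agents. g j) = (g 1 * (g 2 * (g 3 * g 4)) :: real)"
  unfolding ad by (simp_all add: agents_def)
lemma L1: "payoff line_net \<rho> \<epsilon> c (lineprof(1:=f)) 1 = f 1 * (\<rho>*(1-\<epsilon>)^4 - c*\<rho>*(1-\<epsilon>)^1) + f 0 * (- c*(1 - \<rho>*(1-\<epsilon>)^1))"
  unfolding payoff_def line_net_def network.select_convs ap ls lineprof_def
  apply (simp add: expand del: One_nat_def)
  apply (simp add: algebra_simps eval_nat_numeral)
  done
lemma L2: "payoff line_net \<rho> \<epsilon> c (lineprof(2:=f)) 2 = f 1 * (\<rho>*(1-\<epsilon>)^4 - c*\<rho>*(1-\<epsilon>)^2) + f 0 * (- c*(1 - \<rho>*(1-\<epsilon>)^2))"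
  unfolding payoff_def line_net_def network.select_convs ap ls lineprof_def
  apply (simp add: expand del: One_nat_def)
  apply (simp add: algebra_simps eval_nat_numeral)
  done
lemma L3: "payoff line_net \<rho> \<epsilon> c (lineprof(3:=f)) 3 = f 1 * (\<rho>*(1-\<epsilon>)^4 - c*\<rho>*(1-\<epsilon>)^3) + f 0 * (- c*(1 - \<rho>*(1-\<epsilon>)^3))"
  unfolding payoff_def line_net_def network.select_convs ap ls lineprof_def
  apply (simp add: expand del: One_nat_def)
  apply (simp add: algebra_simps eval_nat_numeral)
  done
lemma L4: "payoff line_net \<rho> \<epsilon> c (lineprof(4:=f)) 4 = f 1 * (\<rho>*(1-\<epsilon>)^4 - c*\<rho>*(1-\<epsilon>)^4) + f 0 * (\<rho>*(1-\<epsilon>)^3*\<epsilon> - c*(1 - \<rho>*(1-\<epsilon>)^4))"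
  unfolding payoff_def line_net_def network.select_convs ap ls lineprof_def
  apply (simp add: expand del: One_nat_def)
  apply (simp add: algebra_simps eval_nat_numeral)
  done

lemma Lall: "all_adopt_prob line_net \<rho> \<epsilon> lineprof = \<rho>*(1-\<epsilon>)^4"
  unfolding all_adopt_prob_def line_net_def network.select_convs ap ls lineprof_def
  by (simp add: expand del: One_nat_def)

lemma Lgen: "i \<in> agents \<Longrightarrow> payoff line_net \<rho> \<epsilon> c (lineprof(i:=f)) i = f 1 * (\<rho>*(1-\<epsilon>)^4 - c*\<rho>*(1-\<epsilon>)^i) + f 0 * ((if i = 4 then \<rho>*(1-\<epsilon>)^3*\<epsilon> else 0) - c*(1 - \<rho>*(1-\<epsilon>)^i))"
  unfolding agents_def using L1 L2 L3 L4 by (auto simp del: One_nat_def)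

lemma line_bne:
  assumes r: "0 < \<rho>" "\<rho> < 1" and e: "0 < \<epsilon>" "\<epsilon> < 1" and c: "0 \<le> c" "c \<le> (1-\<epsilon>)^3"
    and c4: "\<rho>*(1-\<epsilon>)^3*\<epsilon> \<le> c*(1 - \<rho>*(1-\<epsilon>)^4)"
  shows "is_BNE line_net \<rho> \<epsilon> c lineprof"
  unfolding is_BNE_def
proof (intro conjI ballI allI impI)
  show "valid_profile line_net lineprof"
    unfolding valid_profile_def valid_strategy_def lineprof_def by auto
next
  fix i f assume i: "i \<in> agents" and vf: "valid_strategy line_net i f"
  have f0: "0 \<le> f 0" "f 0 \<le> 1" and f1: "0 \<le> f 1" "f 1 \<le> 1"
    using vf unfolding valid_strategy_def line_net_def by auto
  define d where "d = 1 - \<epsilon>"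
  have d: "0 < d" "d < 1" using e unfolding d_def by auto
  have i14: "1 \<le> i" "i \<le> 4" using i unfolding agents_def by auto
  have "d^3 \<le> d^(4-i)" using d i14 by (intro power_decreasing) auto
  moreover have "c \<le> d^3" using c unfolding d_def by simp
  ultimately have "c \<le> d^(4-i)" by linarith
  then have "c * d^i \<le> d^(4-i) * d^i" using d
    by (intro mult_right_mono) auto
  also have "\<dots> = d^4" using i14 by (simp add: power_add[symmetric])
  finally have cd: "c * d^i \<le> d^4" .
  define Y where "Y = \<rho>*(1-\<epsilon>)^4 - c*\<rho>*(1-\<epsilon>)^i"
  have Y: "0 \<le> Y" unfolding Y_def d_def[symmetric]
    using mult_left_mono[OF cd, of \<rho>] r by (simp add: algebra_simps)
  define Z where "Z = (if i = 4 then \<rho>*(1-\<epsilon>)^3*\<epsilon> else 0) - c*(1 - \<rho>*(1-\<epsilon>)^i)"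
  have "d^i \<le> 1" using d by (simp add: power_le_one)
  then have "\<rho> * d^i \<le> 1" using r d by (metis less_eq_real_def mult_le_one zero_le_power)
  then have X: "0 \<le> 1 - \<rho>*(1-\<epsilon>)^i" unfolding d_def by simp
  have Z: "Z \<le> 0"
  proof (cases "i = 4")
    case True then show ?thesis using c4 unfolding Z_def by simp
  next
    case False then show ?thesis using X c unfolding Z_def by simp
  qed
  have "payoff line_net \<rho> \<epsilon> c lineprof i = payoff line_net \<rho> \<epsilon> c (lineprof(i:=lineprof i)) i" by simp
  also have "\<dots> = Y" using Lgen[OF i] unfolding Y_def by (simp add: lineprof_def)
  finally have pe: "payoff line_net \<rho> \<epsilon> c lineprof i = Y" .
  have "payoff line_net \<rho> \<epsilon> c (lineprof(i:=f)) i = f 1 * Y + f 0 * Z"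
    using Lgen[OF i] unfolding Y_def Z_def by simp
  also have "\<dots> \<le> Y" using f0 f1 Y Z
    by (smt (verit) mult_left_le_one_le mult_nonneg_nonpos)
  finally show "payoff line_net \<rho> \<epsilon> c (lineprof(i := f)) i \<le> payoff line_net \<rho> \<epsilon> c lineprof i"
    using pe by simp
qed


lemma hA: "(x::real) < a/4 \<Longrightarrow> a/2 < y \<Longrightarrow> 0 \<le> z \<Longrightarrow> 0 < a \<Longrightarrow> x - y - z < 0"
  by linarith
lemma hB: "(x::real) \<le> p \<Longrightarrow> y \<le> b \<Longrightarrow> a/2 \<le> y \<Longrightarrow> 8*p < a \<Longrightarrow> 0 < a \<Longrightarrow> x \<le> b"
  by linarith

lemma pw: "0 \<le> (W::real) \<Longrightarrow> (t \<Longrightarrow> P \<le> (if t' then 1 else 0)) \<Longrightarrow>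
  (if b then W*((if t then P else 0) - c) else 0) \<le> (if b then W*((if t \<and> t' then 1 else 0) - c) else 0)"
proof -
  assume W: "0 \<le> W" and h: "t \<Longrightarrow> P \<le> (if t' then 1 else 0)"
  have "(if t then P else 0) - c \<le> (if t \<and> t' then 1 else 0) - c" using h by auto
  then show ?thesis using mult_left_mono[OF _ W] by auto
qed
lemma pw1: "0 \<le> (W::real) \<Longrightarrow> P \<le> 1 \<Longrightarrow>
  (if b then W*((if t then P else 0) - c) else 0) \<le> (if b then W*((if t then 1 else 0) - c) else 0)"
proof -
  assume W: "0 \<le> W" and h: "P \<le> 1"
  have "(if t then P else 0) - c \<le> (if t then 1 else 0) - c" using h by auto
  then show ?thesis using mult_left_mono[OF _ W] by auto
qed

lemma cycle_range: "cycle_sig 1 w \<in> {0,1} \<and> cycle_sig 2 w \<in> {0,1} \<and> cycle_sig 4 w \<in> {0,1} \<and> cycle_sig 3 w \<in> {0,1,2,3}"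
  by (simp add: cycle_sig_def Let_def)

lemma cycle_part:
  assumes r: "0 < \<rho>" "\<rho> < 1" and e: "0 < \<epsilon>" "\<epsilon> < 1/10" and re: "8*\<rho>*\<epsilon> < 1 - \<rho>"
    and c: "1/2 < c" "c < 1" and bne: "is_BNE cycle_net \<rho> \<epsilon> c \<tau>"
  shows "all_adopt_prob cycle_net \<rho> \<epsilon> \<tau> < \<rho>*(1-\<epsilon>)^4"
proof -
  have vp: "\<And>j s. j \<in> agents \<Longrightarrow> s \<in> sigset cycle_net j \<Longrightarrow> 0 \<le> \<tau> j s \<and> \<tau> j s \<le> 1"
    using bne unfolding is_BNE_def valid_profile_def valid_strategy_def by auto
  have tb: "0 \<le> \<tau> j (cycle_sig j w) \<and> \<tau> j (cycle_sig j w) \<le> 1" if "j \<in> agents" for j w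
  proof -
    have "cycle_sig j w \<in> sigset cycle_net j" using cycle_range[of w] that
      unfolding agents_def cycle_net_def by auto
    then show ?thesis using vp that by auto
  qed
  have pb: "(\<Prod>j\<in>A. \<tau> j (cycle_sig j w)) \<le> 1" if "A \<subseteq> agents" for A w
  proof (rule prod_le_1)
    fix x assume "x \<in> A"
    then show "0 \<le> \<tau> x (cycle_sig x w) \<and> \<tau> x (cycle_sig x w) \<le> 1" using tb[of x w] that by blast
  qed
  have wp: "0 \<le> wprob \<rho> \<epsilon> w" for w using r e by (intro wprob_nonneg) auto
  have sigc: "sig cycle_net = cycle_sig" "narcs cycle_net = 5" "sigset cycle_net 3 = {0,1,2,3}"
    "\<And>j. j \<noteq> 3 \<Longrightarrow> sigset cycle_net j = {0,1}"
    by (auto simp: cycle_net_def)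
  have a1: "1 \<in> agents" and a2: "2 \<in> agents" and a3: "3 \<in> agents" and a4: "4 \<in> agents"
    by (auto simp: agents_def)
  define d where "d = 1 - \<epsilon>"
  have d: "0 < d" "d < 1" using e unfolding d_def by auto
  define u where "u = 1 - d^2"
  have u: "0 \<le> u" "u \<le> 2*\<epsilon>" using d e unfolding u_def d_def by (auto simp: power2_eq_square algebra_simps)
  have "\<rho>*u \<le> \<rho>*(2*\<epsilon>)" using u r by (intro mult_left_mono) auto
  then have ru: "\<rho>*u < (1-\<rho>)/4" using re by simp
  have k1: "(1-\<rho>)/2 < c*(1-\<rho>)" using mult_strict_right_mono[of "1/2" c "1-\<rho>"] c r by simp
  have k2: "0 \<le> c*\<rho>*u" using c r u by simp
  have k3: "0 < 1 - \<rho>" using r by simp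
  have key: "\<rho>*u - c*(1-\<rho>) - c*\<rho>*u < 0" by (rule hA[OF ru k1 k2 k3])
  have "\<rho>*(1-(1-\<epsilon>)^2) - c*(1-\<rho> + \<rho>*(1-(1-\<epsilon>)^2)) = \<rho>*u - c*(1-\<rho>) - c*\<rho>*u"
    unfolding u_def d_def by (simp add: algebra_simps)
  with key have S0neg: "\<rho>*(1-(1-\<epsilon>)^2) - c*(1-\<rho> + \<rho>*(1-(1-\<epsilon>)^2)) < 0" by simp
  have t20: "\<tau> 2 0 = 0"
  proof (rule bne_zero[OF bne a2])
    show "(0::nat) \<in> sigset cycle_net 2" using sigc by simp
    have "(\<Sum>w\<in>worlds (narcs cycle_net). if sig cycle_net 2 w = 0 then wprob \<rho> \<epsilon> w *
        ((if fst w then \<Prod>j\<in>agents-{2}. \<tau> j (sig cycle_net j w) else 0) - c) else 0)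
      \<le> (\<Sum>w\<in>worlds 5. if cycle_sig 2 w = 0 then wprob \<rho> \<epsilon> w * ((if fst w then 1 else 0) - c) else 0)"
      unfolding sigc(1,2)
    proof (rule sum_mono)
      fix w
      have hb: "(\<Prod>j\<in>agents-{2}. \<tau> j (cycle_sig j w)) \<le> 1" by (rule pb) auto
      show "(if cycle_sig 2 w = 0 then wprob \<rho> \<epsilon> w *
        ((if fst w then \<Prod>j\<in>agents-{2}. \<tau> j (cycle_sig j w) else 0) - c) else 0)
        \<le> (if cycle_sig 2 w = 0 then wprob \<rho> \<epsilon> w * ((if fst w then 1 else 0) - c) else 0)"
        by (rule pw1[OF wp hb])
    qed
    also have "\<dots> < 0" unfolding S20 by (rule S0neg)
    finally show "(\<Sum>w\<in>worlds (narcs cycle_net). if sig cycle_net 2 w = 0 then wprob \<rho> \<epsilon> w *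
        ((if fst w then \<Prod>j\<in>agents-{2}. \<tau> j (sig cycle_net j w) else 0) - c) else 0) < 0" .
  qed
  have t40: "\<tau> 4 0 = 0"
  proof (rule bne_zero[OF bne a4])
    show "(0::nat) \<in> sigset cycle_net 4" using sigc by simp
    have "(\<Sum>w\<in>worlds (narcs cycle_net). if sig cycle_net 4 w = 0 then wprob \<rho> \<epsilon> w *
        ((if fst w then \<Prod>j\<in>agents-{4}. \<tau> j (sig cycle_net j w) else 0) - c) else 0)
      \<le> (\<Sum>w\<in>worlds 5. if cycle_sig 4 w = 0 then wprob \<rho> \<epsilon> w * ((if fst w then 1 else 0) - c) else 0)"
      unfolding sigc(1,2)
    proof (rule sum_mono)
      fix w
      have hb: "(\<Prod>j\<in>agents-{4}. \<tau> j (cycle_sig j w)) \<le> 1" by (rule pb) auto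
      show "(if cycle_sig 4 w = 0 then wprob \<rho> \<epsilon> w *
        ((if fst w then \<Prod>j\<in>agents-{4}. \<tau> j (cycle_sig j w) else 0) - c) else 0)
        \<le> (if cycle_sig 4 w = 0 then wprob \<rho> \<epsilon> w * ((if fst w then 1 else 0) - c) else 0)"
        by (rule pw1[OF wp hb])
    qed
    also have "\<dots> < 0" unfolding S40 by (rule S0neg)
    finally show "(\<Sum>w\<in>worlds (narcs cycle_net). if sig cycle_net 4 w = 0 then wprob \<rho> \<epsilon> w *
        ((if fst w then \<Prod>j\<in>agents-{4}. \<tau> j (sig cycle_net j w) else 0) - c) else 0) < 0" .
  qed
  have "d - c*(1+d) < 0"
  proof -
    have "(1+d)/2 < c*(1+d)" using mult_strict_right_mono[of "1/2" c "1+d"] c d by simp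
    moreover have "d < (1+d)/2" using d by simp
    ultimately show ?thesis by linarith
  qed
  then have "\<rho>*d^3*\<epsilon>*(d - c*(1+d)) < 0" using r d e by (intro mult_pos_neg) auto
  moreover have "\<rho>*(1-\<epsilon>)^4*\<epsilon> - c*\<rho>*(1-\<epsilon>)^3*(1-(1-\<epsilon>)^2) = \<rho>*d^3*\<epsilon>*(d - c*(1+d))"
    unfolding d_def by (simp add: algebra_simps eval_nat_numeral)
  ultimately have S3neg: "\<rho>*(1-\<epsilon>)^4*\<epsilon> - c*\<rho>*(1-\<epsilon>)^3*(1-(1-\<epsilon>)^2) < 0" by simp
  have t31: "\<tau> 3 1 = 0"
  proof (rule bne_zero[OF bne a3])
    show "(1::nat) \<in> sigset cycle_net 3" using sigc by simp
    have "(\<Sum>w\<in>worlds (narcs cycle_net). if sig cycle_net 3 w = 1 then wprob \<rho> \<epsilon> w *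
        ((if fst w then \<Prod>j\<in>agents-{3}. \<tau> j (sig cycle_net j w) else 0) - c) else 0)
      \<le> (\<Sum>w\<in>worlds 5. if cycle_sig 3 w = 1 then wprob \<rho> \<epsilon> w * ((if fst w \<and> cycle_sig 4 w = 1 then 1 else 0) - c) else 0)"
      unfolding sigc(1,2)
    proof (rule sum_mono)
      fix w
      have pe: "(\<Prod>j\<in>agents-{3}. \<tau> j (cycle_sig j w)) = \<tau> 1 (cycle_sig 1 w) * (\<tau> 2 (cycle_sig 2 w) * \<tau> 4 (cycle_sig 4 w))"
        by (rule ap)
      have hb: "(\<Prod>j\<in>agents-{3}. \<tau> j (cycle_sig j w)) \<le> (if cycle_sig 4 w = 1 then 1 else 0)"
      proof (cases "cycle_sig 4 w = 1")
        case True then show ?thesis using pb[of "agents-{3}" w] by auto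
      next
        case False then have "cycle_sig 4 w = 0" using cycle_range[of w] by auto
        then show ?thesis unfolding pe using t40 by simp
      qed
      show "(if cycle_sig 3 w = 1 then wprob \<rho> \<epsilon> w *
        ((if fst w then \<Prod>j\<in>agents-{3}. \<tau> j (cycle_sig j w) else 0) - c) else 0)
        \<le> (if cycle_sig 3 w = 1 then wprob \<rho> \<epsilon> w * ((if fst w \<and> cycle_sig 4 w = 1 then 1 else 0) - c) else 0)"
        by (rule pw[OF wp]) (rule hb)
    qed
    also have "\<dots> < 0" unfolding S31 by (rule S3neg)
    finally show "(\<Sum>w\<in>worlds (narcs cycle_net). if sig cycle_net 3 w = 1 then wprob \<rho> \<epsilon> w *
        ((if fst w then \<Prod>j\<in>agents-{3}. \<tau> j (sig cycle_net j w) else 0) - c) else 0) < 0" .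
  qed
  have t32: "\<tau> 3 2 = 0"
  proof (rule bne_zero[OF bne a3])
    show "(2::nat) \<in> sigset cycle_net 3" using sigc by simp
    have "(\<Sum>w\<in>worlds (narcs cycle_net). if sig cycle_net 3 w = 2 then wprob \<rho> \<epsilon> w *
        ((if fst w then \<Prod>j\<in>agents-{3}. \<tau> j (sig cycle_net j w) else 0) - c) else 0)
      \<le> (\<Sum>w\<in>worlds 5. if cycle_sig 3 w = 2 then wprob \<rho> \<epsilon> w * ((if fst w \<and> cycle_sig 2 w = 1 then 1 else 0) - c) else 0)"
      unfolding sigc(1,2)
    proof (rule sum_mono)
      fix w
      have pe: "(\<Prod>j\<in>agents-{3}. \<tau> j (cycle_sig j w)) = \<tau> 1 (cycle_sig 1 w) * (\<tau> 2 (cycle_sig 2 w) * \<tau> 4 (cycle_sig 4 w))"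
        by (rule ap)
      have hb: "(\<Prod>j\<in>agents-{3}. \<tau> j (cycle_sig j w)) \<le> (if cycle_sig 2 w = 1 then 1 else 0)"
      proof (cases "cycle_sig 2 w = 1")
        case True then show ?thesis using pb[of "agents-{3}" w] by auto
      next
        case False then have "cycle_sig 2 w = 0" using cycle_range[of w] by auto
        then show ?thesis unfolding pe using t20 by simp
      qed
      show "(if cycle_sig 3 w = 2 then wprob \<rho> \<epsilon> w *
        ((if fst w then \<Prod>j\<in>agents-{3}. \<tau> j (cycle_sig j w) else 0) - c) else 0)
        \<le> (if cycle_sig 3 w = 2 then wprob \<rho> \<epsilon> w * ((if fst w \<and> cycle_sig 2 w = 1 then 1 else 0) - c) else 0)"
        by (rule pw[OF wp]) (rule hb)
    qed
    also have "\<dots> < 0" unfolding S32 by (rule S3neg)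
    finally show "(\<Sum>w\<in>worlds (narcs cycle_net). if sig cycle_net 3 w = 2 then wprob \<rho> \<epsilon> w *
        ((if fst w then \<Prod>j\<in>agents-{3}. \<tau> j (sig cycle_net j w) else 0) - c) else 0) < 0" .
  qed
  have "all_adopt_prob cycle_net \<rho> \<epsilon> \<tau> \<le> (\<Sum>w\<in>worlds 5. wprob \<rho> \<epsilon> w * (if cycle_sig 2 w = 1 \<and> cycle_sig 4 w = 1 \<and> (cycle_sig 3 w = 0 \<or> cycle_sig 3 w = 3) then 1 else 0))"
    unfolding all_adopt_prob_def sigc(1,2)
  proof (rule sum_mono)
    fix w
    have pe: "(\<Prod>j\<in>agents. \<tau> j (cycle_sig j w)) = \<tau> 1 (cycle_sig 1 w) * (\<tau> 2 (cycle_sig 2 w) * (\<tau> 3 (cycle_sig 3 w) * \<tau> 4 (cycle_sig 4 w)))"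
      by (rule ap)
    have "(\<Prod>j\<in>agents. \<tau> j (cycle_sig j w)) \<le> (if cycle_sig 2 w = 1 \<and> cycle_sig 4 w = 1 \<and> (cycle_sig 3 w = 0 \<or> cycle_sig 3 w = 3) then 1 else 0)"
    proof (cases "cycle_sig 2 w = 1 \<and> cycle_sig 4 w = 1 \<and> (cycle_sig 3 w = 0 \<or> cycle_sig 3 w = 3)")
      case True then show ?thesis using pb[of agents w] by auto
    next
      case False
      then have "cycle_sig 2 w = 0 \<or> cycle_sig 4 w = 0 \<or> cycle_sig 3 w = 1 \<or> cycle_sig 3 w = 2"
        using cycle_range[of w] by auto
      then show ?thesis unfolding pe using t20 t40 t31 t32 False by auto
    qed
    then show "wprob \<rho> \<epsilon> w * (\<Prod>j\<in>agents. \<tau> j (cycle_sig j w))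
      \<le> wprob \<rho> \<epsilon> w * (if cycle_sig 2 w = 1 \<and> cycle_sig 4 w = 1 \<and> (cycle_sig 3 w = 0 \<or> cycle_sig 3 w = 3) then 1 else 0)"
      using wp[of w] by (rule mult_left_mono)
  qed
  also have "\<dots> = \<rho>*(1-\<epsilon>)^3*((1-\<epsilon>)^2+\<epsilon>^2)" by (rule SP)
  also have "\<dots> < \<rho>*(1-\<epsilon>)^4"
  proof -
    have "\<rho>*d^3*(\<epsilon>*(2*\<epsilon> - 1)) < 0" using r d e by (intro mult_pos_neg) auto
    moreover have "\<rho>*(1-\<epsilon>)^3*((1-\<epsilon>)^2+\<epsilon>^2) - \<rho>*(1-\<epsilon>)^4 = \<rho>*d^3*(\<epsilon>*(2*\<epsilon> - 1))"
      unfolding d_def by (simp add: algebra_simps eval_nat_numeral)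
    ultimately show ?thesis by simp
  qed
  finally show ?thesis .
qed


theorem mainTheorem9:
  fixes \<rho> :: real
  assumes "0 < \<rho>" and "\<rho> < 1"
  shows "\<exists>\<epsilon>0>0. \<forall>\<epsilon>::real. 0 < \<epsilon> \<and> \<epsilon> < 1 \<and> \<epsilon> < \<epsilon>0 \<longrightarrow>
           (\<exists>a b::real. 0 \<le> a \<and> a < b \<and> b \<le> 1 \<and>
              (\<forall>c. a < c \<and> c < b \<longrightarrow>
                 (\<exists>\<sigma>. is_BNE line_net \<rho> \<epsilon> c \<sigma> \<and>
                    (\<forall>\<tau>. is_BNE cycle_net \<rho> \<epsilon> c \<tau> \<longrightarrow>
                       all_adopt_prob cycle_net \<rho> \<epsilon> \<tau> < all_adopt_prob line_net \<rho> \<epsilon> \<sigma>))))"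
proof (rule exI[of _ "min (1/10) ((1-\<rho>)/(8*\<rho>))"], intro conjI allI impI)
  show "0 < min (1/10) ((1-\<rho>)/(8*\<rho>))" using assms by auto
  fix \<epsilon> :: real assume h: "0 < \<epsilon> \<and> \<epsilon> < 1 \<and> \<epsilon> < min (1/10) ((1-\<rho>)/(8*\<rho>))"
  then have e: "0 < \<epsilon>" "\<epsilon> < 1/10" by auto
  from h have "\<epsilon> < (1-\<rho>)/(8*\<rho>)" by auto
  then have re: "8*\<rho>*\<epsilon> < 1 - \<rho>" using assms by (simp add: pos_less_divide_eq mult.commute)
  have "(9/10::real)^3 \<le> (1-\<epsilon>)^3" using e by (intro power_mono) auto
  then have b1: "1/2 < (1-\<epsilon>)^3" by (simp add: eval_nat_numeral)
  have b2: "(1-\<epsilon>)^3 \<le> 1" using e by (simp add: power_le_one)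
  show "\<exists>a b::real. 0 \<le> a \<and> a < b \<and> b \<le> 1 \<and>
              (\<forall>c. a < c \<and> c < b \<longrightarrow>
                 (\<exists>\<sigma>. is_BNE line_net \<rho> \<epsilon> c \<sigma> \<and>
                    (\<forall>\<tau>. is_BNE cycle_net \<rho> \<epsilon> c \<tau> \<longrightarrow>
                       all_adopt_prob cycle_net \<rho> \<epsilon> \<tau> < all_adopt_prob line_net \<rho> \<epsilon> \<sigma>)))"
  proof (rule exI[of _ "1/2"], rule exI[of _ "(1-\<epsilon>)^3"], intro conjI allI impI)
    show "0 \<le> (1/2::real)" by simp
    show "1/2 < (1-\<epsilon>)^3" by (rule b1)
    show "(1-\<epsilon>)^3 \<le> 1" by (rule b2)
    fix c :: real assume c: "1/2 < c \<and> c < (1-\<epsilon>)^3"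
    show "\<exists>\<sigma>. is_BNE line_net \<rho> \<epsilon> c \<sigma> \<and>
                    (\<forall>\<tau>. is_BNE cycle_net \<rho> \<epsilon> c \<tau> \<longrightarrow>
                       all_adopt_prob cycle_net \<rho> \<epsilon> \<tau> < all_adopt_prob line_net \<rho> \<epsilon> \<sigma>)"
    proof (rule exI[of _ lineprof], intro conjI allI impI)
      have d3: "(1-\<epsilon>)^3 \<le> 1" "(1-\<epsilon>)^4 \<le> 1" "0 \<le> (1-\<epsilon>)^3" "0 \<le> (1-\<epsilon>)^4"
        using e by (auto simp: power_le_one)
      have "\<rho>*(1-\<epsilon>)^3*\<epsilon> \<le> \<rho>*1*\<epsilon>" using d3 assms e
        by (intro mult_right_mono mult_left_mono) auto
      then have p1: "\<rho>*(1-\<epsilon>)^3*\<epsilon> \<le> \<rho>*\<epsilon>" by simp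
      have p2: "8*(\<rho>*\<epsilon>) < 1-\<rho>" using re by (simp add: mult.assoc)
      have "\<rho>*(1-\<epsilon>)^4 \<le> \<rho>" using d3 assms
        by (metis mult.right_neutral mult_left_mono less_eq_real_def)
      then have m1: "c*(1-\<rho>) \<le> c*(1 - \<rho>*(1-\<epsilon>)^4)" using c b1 by (intro mult_left_mono) auto
      have m2: "(1-\<rho>)/2 \<le> c*(1-\<rho>)" using mult_right_mono[of "1/2" c "1-\<rho>"] c assms by simp
      have m3: "0 < 1 - \<rho>" using assms by simp
      have c4: "\<rho>*(1-\<epsilon>)^3*\<epsilon> \<le> c*(1 - \<rho>*(1-\<epsilon>)^4)" by (rule hB[OF p1 m1 m2 p2 m3])
      show "is_BNE line_net \<rho> \<epsilon> c lineprof"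
        using c e assms c4 by (intro line_bne) auto
      fix \<tau> assume "is_BNE cycle_net \<rho> \<epsilon> c \<tau>"
      then have "all_adopt_prob cycle_net \<rho> \<epsilon> \<tau> < \<rho>*(1-\<epsilon>)^4"
        using c e assms re b2 by (intro cycle_part) auto
      then show "all_adopt_prob cycle_net \<rho> \<epsilon> \<tau> < all_adopt_prob line_net \<rho> \<epsilon> lineprof"
        by (simp add: Lall)
    qed
  qed
qed

end
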